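(* Let $r\ge 3$ and let $k_0,k_1,\dots,k_{r-1}$ be integers with $3\le k_0\le k_1\le \cdots \le k_{r-1}$. Then for every integer $m$ with $2\le m\le r-1$, \[ S(r;k_0,\dots,k_{r-1}) \ge \Bigl(\prod_{j=m}^{r-1}k_j\Bigr)\,S(m;k_0,\dots,k_{m-1}) -\sum_{i=m}^{r-1}\prod_{j=i+1}^{r-1}k_j, \] where an empty product is interpreted as $1$.
   Context: For an integer $k\ge 3$, let $\mathcal{L}(k)$ denote the equation $x_1+x_2+\cdots+x_{k-1}=x_k$ in positive integer variables (the $x_i$ need not be distinct). For $N\ge1$, write $[1,N]=\{1,2,\dots,N\}$. For integers $r\ge1$ and $k_0,\dots,k_{r-1}\ge 3$, the generalized Schur number $S(r;k_0,\dots,k_{r-1})$ is the least positive integer $N$ such that for every coloring $\Delta:[1,N]\to\{0,1,\dots,r-1\}$ there exist some $i\in\{0,\dots,r-1\}$ and positive integers $x_1,\dots,x_{k_i}\in[1,N]$ satisfying $\mathcal{L}(k_i)$ with $\Delta(x_1)=\cdots=\Delta(x_{k_i})=i$. *)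

theory Defs
  imports Main
begin

text \<open>A coloring \<Delta> of [1,N] with colors {0,...,r-1} has a monochromatic solution of
  L(k_i) in color i for some i < r: positive integers x_1,...,x_{k_i} in [1,N]
  (here indexed x 0, ..., x (k_i - 1)) with x_1 + ... + x_{k_i - 1} = x_{k_i},
  all of color i.\<close>
definition has_mono_solution :: "nat \<Rightarrow> (nat \<Rightarrow> nat) \<Rightarrow> nat \<Rightarrow> (nat \<Rightarrow> nat) \<Rightarrow> bool" where
  "has_mono_solution r k N \<Delta> \<longleftrightarrow>
     (\<exists>i < r. \<exists>x :: nat \<Rightarrow> nat.
        (\<forall>j < k i. x j \<in> {1..N} \<and> \<Delta> (x j) = i) \<and>
        (\<Sum>j < k i - 1. x j) = x (k i - 1))"

definition gen_schur :: "nat \<Rightarrow> (nat \<Rightarrow> nat) \<Rightarrow> nat" where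
  "gen_schur r k = (LEAST N. N \<ge> 1 \<and>
     (\<forall>\<Delta> :: nat \<Rightarrow> nat. (\<forall>n \<in> {1..N}. \<Delta> n < r) \<longrightarrow> has_mono_solution r k N \<Delta>))"

end

theory Submission
  imports Defs "HOL-Library.Ramsey"
begin

lemma mono_le0: "j \<le> n \<Longrightarrow> (\<And>j. j < n \<Longrightarrow> a j < a (Suc j)) \<Longrightarrow> (a 0 :: nat) \<le> a j"
proof (induction j)
  case 0 then show ?case by simp
next
  case (Suc j)
  then have "a 0 \<le> a j" by simp
  moreover have "a j < a (Suc j)" using Suc.prems by simp
  ultimately show ?case by simp
qed

lemma telesc: "(\<Sum>j<n. (a (Suc j) - a j :: nat)) = a n - a 0" if "\<And>j. j < n \<Longrightarrow> a j < a (Suc j)"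
  using that
proof (induction n)
  case 0 then show ?case by simp
next
  case (Suc n)
  have "a 0 \<le> a n" using mono_le0[of n "Suc n" a] Suc.prems by simp
  moreover have "a n < a (Suc n)" using Suc.prems by simp
  moreover have "(\<Sum>j<n. (a (Suc j) - a j)) = a n - a 0" using Suc by simp
  ultimately show ?case by simp
qed

lemma schur_exists:
  assumes "\<And>i. i < t \<Longrightarrow> k i \<ge> 2"
  shows "\<exists>N. N \<ge> 1 \<and> (\<forall>\<Delta>. (\<forall>n \<in> {1..N}. \<Delta> n < t) \<longrightarrow> has_mono_solution t k N \<Delta>)"
proof -
  obtain N :: nat where N: "partn_lst {..<N} (map k [0..<t]) 2" using ramsey_full by blast
  show ?thesis
  proof (intro exI conjI allI impI)
    show "1 \<le> N + 1" by simp
    fix \<Delta> :: "nat \<Rightarrow> nat"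
    assume col: "\<forall>n\<in>{1..N+1}. \<Delta> n < t"
    define f where "f H = \<Delta> (Max H - Min H)" for H :: "nat set"
    have f2: "f {a, b} = \<Delta> (b - a)" if "a < b" for a b
      using that by (simp add: f_def max_def min_def)
    have "f \<in> nsets {..<N} 2 \<rightarrow> {..<t}"
    proof
      fix H assume "H \<in> nsets {..<N} 2"
      then have HN: "H \<subseteq> {..<N}" and "card H = 2" by (auto simp: nsets_def)
      then obtain a b where H: "H = {a,b}" "a \<noteq> b" by (auto simp: card_2_iff)
      have "a < N" "b < N" using HN H by auto
      show "f H \<in> {..<t}"
      proof (cases "a < b")
        case True
        have "b - a \<in> {1..N+1}" using True \<open>b < N\<close> by auto
        then show ?thesis using f2[of a b] col H True by auto
      next
        case False then have "b < a" using H by simp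
        have "a - b \<in> {1..N+1}" using \<open>b < a\<close> \<open>a < N\<close> by auto
        then show ?thesis using f2[of b a] col H \<open>b < a\<close> by (auto simp: insert_commute)
      qed
    qed
    then obtain i H where i: "i < length (map k [0..<t])" and H: "H \<in> nsets {..<N} (map k [0..<t] ! i)"
      and mono: "f ` (nsets H 2) \<subseteq> {i}"
      using partn_lstE[OF N] by (metis length_map length_upt minus_nat.diff_0)
    have it: "i < t" using i by simp
    define n where "n = k i"
    have n2: "n \<ge> 2" using assms it n_def by simp
    have Hfin: "finite H" and Hsub: "H \<subseteq> {..<N}" and Hc: "card H = n"
      using H it by (auto simp: nsets_def n_def)
    define l where "l = sorted_list_of_set H"
    define a where "a j = l ! j" for j
    have ll: "length l = n" using Hc by (simp add: l_def)
    have ss: "sorted_wrt (<) l" using strict_sorted_list_of_set l_def by simp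
    have setl: "set l = H" using Hfin l_def by simp
    have pair: "a p < a q \<and> 1 \<le> a q - a p \<and> a q - a p \<le> N + 1 \<and> \<Delta> (a q - a p) = i"
      if "p < q" "q < n" for p q
    proof -
      have lt: "a p < a q" using sorted_wrt_nth_less[OF ss that(1)] that ll a_def by simp
      have inH: "a p \<in> H" "a q \<in> H" using that ll setl a_def by (metis nth_mem order.strict_trans)+
      then have "a q < N" using Hsub by auto
      moreover have "{a p, a q} \<in> nsets H 2" using inH lt by simp
      then have "f {a p, a q} = i" using mono by (simp add: image_subset_iff)
      ultimately show ?thesis using lt f2 by auto
    qed
    define x where "x j = (if j < n - 1 then a (Suc j) - a j else a (n - 1) - a 0)" for j
    have "\<forall>j < k i. x j \<in> {1..N+1} \<and> \<Delta> (x j) = i"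
    proof (intro allI impI)
      fix j assume "j < k i"
      then show "x j \<in> {1..N+1} \<and> \<Delta> (x j) = i"
        using pair[of j "Suc j"] pair[of 0 "n - 1"] n2 unfolding x_def n_def[symmetric]
        by (cases "j < n - 1") auto
    qed
    moreover have "(\<Sum>j < k i - 1. x j) = x (k i - 1)"
    proof -
      have "(\<Sum>j < n - 1. x j) = (\<Sum>j < n - 1. a (Suc j) - a j)" by (simp add: x_def)
      also have "\<dots> = a (n - 1) - a 0" using pair by (intro telesc) auto
      finally show ?thesis by (simp add: x_def n_def)
    qed
    ultimately show "has_mono_solution t k (N + 1) \<Delta>"
      unfolding has_mono_solution_def using it by blast
  qed
qed

lemma construction:
  assumes col: "\<forall>n\<in>{1..s}. \<Delta> n < t"
    and bad: "\<not> has_mono_solution t k s \<Delta>"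
    and K3: "k t \<ge> 3"
    and kle: "\<And>i. i < t \<Longrightarrow> k i \<le> k t"
    and kpos: "\<And>i. i < t \<Longrightarrow> k i \<ge> 1"
  defines "B \<equiv> (k t - 1) * s + k t - 2"
  defines "\<Delta>' \<equiv> (\<lambda>n. if n \<le> s then \<Delta> n else if n \<le> B then t else \<Delta> (n - B))"
  shows "(\<forall>n\<in>{1..B+s}. \<Delta>' n < Suc t) \<and> \<not> has_mono_solution (Suc t) k (B + s) \<Delta>'"
proof
  have Bs: "B \<ge> 2 * s + 1"
  proof -
    have "(k t - 1) * s \<ge> 2 * s" using K3 by (intro mult_le_mono1) simp
    then show "B \<ge> 2 * s + 1" using K3 unfolding B_def by linarith
  qed
  show "\<forall>n\<in>{1..B+s}. \<Delta>' n < Suc t"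
  proof
    fix n assume n: "n \<in> {1..B+s}"
    show "\<Delta>' n < Suc t"
    proof (cases "n \<le> s")
      case True
      have "\<Delta> n < t" using col n True by auto
      then show ?thesis using True by (simp add: \<Delta>'_def)
    next
      case False
      show ?thesis
      proof (cases "n \<le> B")
        case True then show ?thesis using False by (simp add: \<Delta>'_def)
      next
        case False2: False
        have "n - B \<in> {1..s}" using n False2 by auto
        then have "\<Delta> (n - B) < t" using col by blast
        then show ?thesis using False False2 by (simp add: \<Delta>'_def)
      qed
    qed
  qed
  show "\<not> has_mono_solution (Suc t) k (B + s) \<Delta>'"
  proof
    assume "has_mono_solution (Suc t) k (B + s) \<Delta>'"
    then obtain i x where i: "i < Suc t" and xs: "\<forall>j < k i. x j \<in> {1..B+s} \<and> \<Delta>' (x j) = i"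
      and sumx: "(\<Sum>j < k i - 1. x j) = x (k i - 1)"
      unfolding has_mono_solution_def by blast
    show False
    proof (cases "i = t")
      case True
      have mid: "s < x j \<and> x j \<le> B" if "j < k t" for j
      proof -
        have *: "x j \<in> {1..B+s}" "\<Delta>' (x j) = t" using xs that True by auto
        show ?thesis
        proof (rule ccontr)
          assume "\<not> (s < x j \<and> x j \<le> B)"
          then consider "x j \<le> s" | "x j > B" by linarith
          then show False
          proof cases
            case 1 then have "\<Delta> (x j) < t" using * col by auto
            then show False using * 1 by (simp add: \<Delta>'_def)
          next
            case 2
            have "x j - B \<in> {1..s}" using * 2 by auto
            then have "\<Delta> (x j - B) < t" using col by blast
            then show False using * 2 Bs by (simp add: \<Delta>'_def)
          qed
        qed
      qed
      have "(\<Sum>j < k t - 1. x j) \<ge> (\<Sum>j < k t - 1. s + 1)"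
        proof (intro sum_mono)
        fix j assume "j \<in> {..<k t - 1}"
        then have "j < k t" by simp
        then show "s + 1 \<le> x j" using mid[of j] by simp
      qed
      then have "(\<Sum>j < k t - 1. x j) \<ge> (k t - 1) * (s + 1)" by simp
      moreover have "x (k t - 1) \<le> B" using mid K3 by simp
      moreover have "(k t - 1) * (s + 1) = B + 1"
      proof -
        obtain c where c: "k t = c + 3" using K3 by (metis add.commute le_Suc_ex)
        show ?thesis unfolding B_def c by (simp add: algebra_simps)
      qed
      ultimately show False using sumx True by simp
    next
      case False
      then have it: "i < t" using i by simp
      define n where "n = k i"
      have n3: "n \<ge> 1" using kpos it n_def by simp
      have nK: "n \<le> k t" using kle it n_def by simp
      have outer: "(x j \<le> s \<or> B < x j) \<and> 1 \<le> x j \<and> x j \<le> B + s" if "j < n" for j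
      proof -
        have *: "x j \<in> {1..B+s}" "\<Delta>' (x j) = i" using xs that n_def by auto
        have "\<not> (s < x j \<and> x j \<le> B)" using * it by (auto simp: \<Delta>'_def)
        then show ?thesis using * by auto
      qed
      define y where "y j = (if x j > B then x j - B else x j)" for j
      have ycol: "y j \<in> {1..s} \<and> \<Delta> (y j) = i" if "j < n" for j
      proof -
        have *: "x j \<in> {1..B+s}" "\<Delta>' (x j) = i" using xs that n_def by auto
        show ?thesis
        proof (cases "x j > B")
          case True then show ?thesis using * Bs by (auto simp: y_def \<Delta>'_def)
        next
          case False then show ?thesis using * outer[OF that] by (auto simp: y_def \<Delta>'_def)
        qed
      qed
      define C where "C = (\<Sum>j < n - 1. (if x j > B then 1 else 0 :: nat))"
      have xy: "x j = y j + B * (if x j > B then 1 else 0)" for j by (simp add: y_def)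
      have sx: "(\<Sum>j < n - 1. x j) = (\<Sum>j < n - 1. y j) + B * C"
        unfolding C_def sum_distrib_left sum.distrib[symmetric] by (rule sum.cong, simp, rule xy)
      have ylo: "(\<Sum>j < n - 1. y j) \<le> (n - 1) * s"
      proof -
        have "(\<Sum>j < n - 1. y j) \<le> (\<Sum>j < n - 1. s)"
          proof (intro sum_mono)
          fix j assume "j \<in> {..<n - 1}"
          then have "j < n" by simp
          then show "y j \<le> s" using ycol[of j] by simp
        qed
        then show ?thesis by simp
      qed
      have lastn: "n - 1 < n" using n3 by simp
      show False
      proof (cases "x (n - 1) \<le> s")
        case True
        have "\<forall>j < n - 1. x j \<le> x (n - 1)"
        proof (intro allI impI)
          fix j assume "j < n - 1"
          then have "x j \<le> (\<Sum>j < n - 1. x j)" by (intro member_le_sum) auto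
          then show "x j \<le> x (n - 1)" using sumx n_def by simp
        qed
        then have "\<forall>j < n. y j = x j"
        proof (intro allI impI)
          fix j assume jn: "j < n" and le: "\<forall>j < n - 1. x j \<le> x (n - 1)"
          have "x j \<le> s"
          proof (cases "j < n - 1")
            case True then show ?thesis using le \<open>x (n - 1) \<le> s\<close> by fastforce
          next
            case False then have "j = n - 1" using jn by simp
            then show ?thesis using \<open>x (n - 1) \<le> s\<close> by simp
          qed
          then show "y j = x j" using Bs by (simp add: y_def)
        qed
        then have xc: "\<forall>j<k i. x j \<in> {1..s} \<and> \<Delta> (x j) = i" using ycol n_def by metis
        have "has_mono_solution t k s \<Delta>"
          unfolding has_mono_solution_def using it xc sumx by blast
        then show False using bad by simp
      next
        case False
        then have big: "B < x (n - 1)" "x (n - 1) \<le> B + s" using outer[OF lastn] by auto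
        consider "C = 0" | "C = 1" | "C \<ge> 2" by linarith
        then show False
        proof cases
          case 1
          have "(n - 1) * s \<le> (k t - 1) * s" using nK by (intro mult_le_mono1) simp
          then have "(n - 1) * s \<le> B" using K3 unfolding B_def by linarith
          then show False using sx ylo 1 big sumx n_def by simp
        next
          case 2
          then have "(\<Sum>j < n - 1. y j) = y (n - 1)" using sx sumx big n_def y_def by simp
          then have "has_mono_solution t k s \<Delta>"
            unfolding has_mono_solution_def using it ycol n_def
            by (intro exI[of _ i] conjI exI[of _ y]) auto
          then show False using bad by simp
        next
          case 3
          have "B * C \<ge> B * 2" using 3 by simp
          moreover have "x (n - 1) = (\<Sum>j < n - 1. y j) + B * C" using sx sumx n_def by simp
          ultimately show False using big Bs by linarith
        qed
      qed
    qed
  qed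
qed

lemma construction_ex:
  assumes "\<forall>n\<in>{1..s}. \<Delta> n < t"
    and "\<not> has_mono_solution t k s \<Delta>"
    and "k t \<ge> 3"
    and "\<And>i. i < t \<Longrightarrow> k i \<le> k t"
    and "\<And>i. i < t \<Longrightarrow> k i \<ge> 1"
  shows "\<exists>\<Delta>'. (\<forall>n\<in>{1..((k t - 1) * s + k t - 2) + s}. \<Delta>' n < Suc t) \<and>
     \<not> has_mono_solution (Suc t) k (((k t - 1) * s + k t - 2) + s) \<Delta>'"
  apply (rule exI)
  apply (rule construction)
  using assms by auto

definition goodN :: "nat \<Rightarrow> (nat \<Rightarrow> nat) \<Rightarrow> nat \<Rightarrow> bool" where
  "goodN t k N \<longleftrightarrow> N \<ge> 1 \<and> (\<forall>\<Delta> :: nat \<Rightarrow> nat. (\<forall>n \<in> {1..N}. \<Delta> n < t) \<longrightarrow> has_mono_solution t k N \<Delta>)"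

lemma gs_eq: "gen_schur t k = (LEAST N. goodN t k N)"
  unfolding gen_schur_def goodN_def by simp

lemma gs_prop:
  assumes "\<And>i. i < t \<Longrightarrow> k i \<ge> 2"
  shows "goodN t k (gen_schur t k)"
proof -
  obtain N where "goodN t k N" using schur_exists[of t k] assms unfolding goodN_def by blast
  then show ?thesis unfolding gs_eq by (rule LeastI)
qed

lemma has_mono_mono:
  assumes "has_mono_solution t k N \<Delta>" "N \<le> M"
  shows "has_mono_solution t k M \<Delta>"
  using assms unfolding has_mono_solution_def
  by (meson atLeastAtMost_iff order_trans)

lemma gs_gt:
  assumes "\<And>i. i < t \<Longrightarrow> k i \<ge> 2"
    and col: "\<forall>n\<in>{1..M}. \<Delta> n < t" and bad: "\<not> has_mono_solution t k M \<Delta>"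
  shows "M < gen_schur t k"
proof (rule ccontr)
  assume "\<not> M < gen_schur t k"
  then have le: "gen_schur t k \<le> M" by simp
  have "\<forall>n\<in>{1..gen_schur t k}. \<Delta> n < t" using col le by auto
  then have "has_mono_solution t k (gen_schur t k) \<Delta>"
    using gs_prop[of t k] assms(1) unfolding goodN_def by blast
  then show False using has_mono_mono[OF _ le] bad by blast
qed

lemma gs_bad:
  assumes "\<And>i. i < t \<Longrightarrow> k i \<ge> 2"
  shows "\<exists>\<Delta>. (\<forall>n\<in>{1..gen_schur t k - 1}. \<Delta> n < t) \<and> \<not> has_mono_solution t k (gen_schur t k - 1) \<Delta>"
proof (cases "gen_schur t k - 1 = 0")
  case True
  have "\<not> has_mono_solution t k 0 (\<lambda>_. 0)"
  proof
    assume "has_mono_solution t k 0 (\<lambda>_. 0)"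
    then obtain i x where "i < t" "\<forall>j < k i. x j \<in> {1..0::nat}"
      unfolding has_mono_solution_def by blast
    moreover have "0 < k i" using assms \<open>i < t\<close> by fastforce
    ultimately show False by auto
  qed
  then show ?thesis using True by (intro exI[of _ "\<lambda>_. 0"]) simp
next
  case False
  have "\<not> goodN t k (gen_schur t k - 1)"
    using not_less_Least[of "gen_schur t k - 1" "goodN t k"] False unfolding gs_eq by simp
  then show ?thesis using False unfolding goodN_def by auto
qed

lemma gs_step:
  assumes "\<And>i. i \<le> t \<Longrightarrow> k i \<ge> 3"
    and "\<And>i. i < t \<Longrightarrow> k i \<le> k t"
  shows "int (gen_schur (Suc t) k) \<ge> int (k t) * int (gen_schur t k) - 1"
proof -
  have k2': "k i \<ge> 2" if "i < Suc t" for i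
  proof -
    have "i \<le> t" using that by simp
    then have "k i \<ge> 3" by (rule assms(1))
    then show ?thesis by simp
  qed
  have k2: "\<And>i. i < t \<Longrightarrow> k i \<ge> 2" using k2' by simp
  define s where "s = gen_schur t k - 1"
  have S1: "gen_schur t k \<ge> 1" using gs_prop[of t k] k2 unfolding goodN_def by blast
  obtain \<Delta> where col: "\<forall>n\<in>{1..s}. \<Delta> n < t" and bad: "\<not> has_mono_solution t k s \<Delta>"
    using gs_bad[of t k] k2 unfolding s_def by blast
  have K3: "k t \<ge> 3" using assms(1) by simp
  have kpos: "\<And>i. i < t \<Longrightarrow> k i \<ge> 1" using k2 by fastforce
  define B where "B = (k t - 1) * s + k t - 2"
  obtain \<Delta>' where "(\<forall>n\<in>{1..B+s}. \<Delta>' n < Suc t)" "\<not> has_mono_solution (Suc t) k (B + s) \<Delta>'"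
    proof -
    have "\<exists>\<Delta>'. (\<forall>n\<in>{1..((k t - 1) * s + k t - 2) + s}. \<Delta>' n < Suc t) \<and>
     \<not> has_mono_solution (Suc t) k (((k t - 1) * s + k t - 2) + s) \<Delta>'"
      by (rule construction_ex) (use col bad K3 assms(2) kpos in auto)
    then show ?thesis using that unfolding B_def by blast
  qed
  then have lt: "B + s < gen_schur (Suc t) k" using gs_gt[of "Suc t" k] k2' by blast
  obtain c where c: "k t = c + 3" using K3 by (metis add.commute le_Suc_ex)
  have Ss: "gen_schur t k = s + 1" using S1 s_def by simp
  have "int (B + s + 1) = int (k t) * int (gen_schur t k) - 1"
    unfolding B_def Ss c by (simp add: algebra_simps)
  then show ?thesis using lt by linarith
qed

lemma gs_iter:
  assumes "\<And>i. i < r \<Longrightarrow> k i \<ge> 3"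
    and "\<And>i j. i \<le> j \<Longrightarrow> j < r \<Longrightarrow> k i \<le> k j"
  shows "m + d \<le> r \<Longrightarrow> int (gen_schur (m + d) k) \<ge>
           (\<Prod>j = m..<m+d. int (k j)) * int (gen_schur m k)
           - (\<Sum>i = m..<m+d. \<Prod>j = i+1..<m+d. int (k j))"
proof (induction d)
  case 0 then show ?case by simp
next
  case (Suc d)
  define t where "t = m + d"
  have tr: "t < r" using Suc.prems t_def by simp
  define P where "P = (\<Prod>j = m..<t. int (k j))"
  define \<Sigma> where "\<Sigma> = (\<Sum>i = m..<t. \<Prod>j = i+1..<t. int (k j))"
  have IH: "int (gen_schur t k) \<ge> P * int (gen_schur m k) - \<Sigma>"
    using Suc t_def P_def \<Sigma>_def by simp
  have st: "int (gen_schur (Suc t) k) \<ge> int (k t) * int (gen_schur t k) - 1"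
    by (rule gs_step) (use assms tr in auto)
  have "int (k t) * int (gen_schur t k) \<ge> int (k t) * (P * int (gen_schur m k) - \<Sigma>)"
    using IH by (intro mult_left_mono) auto
  then have main: "int (gen_schur (Suc t) k) \<ge> (P * int (k t)) * int (gen_schur m k) - (\<Sigma> * int (k t) + 1)"
    using st by (simp add: algebra_simps)
  have P1: "(\<Prod>j = m..<Suc t. int (k j)) = P * int (k t)"
    unfolding P_def t_def by (rule prod.atLeastLessThan_Suc) simp
  have "(\<Sum>i = m..<Suc t. \<Prod>j = i+1..<Suc t. int (k j)) = (\<Sum>i = m..<t. \<Prod>j = i+1..<Suc t. int (k j)) + 1"
    by (simp add: t_def sum.atLeastLessThan_Suc)
  also have "(\<Sum>i = m..<t. \<Prod>j = i+1..<Suc t. int (k j)) = (\<Sum>i = m..<t. (\<Prod>j = i+1..<t. int (k j)) * int (k t))"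
    by (rule sum.cong) (auto simp: prod.atLeastLessThan_Suc)
  also have "\<dots> = \<Sigma> * int (k t)" unfolding \<Sigma>_def by (simp add: sum_distrib_right)
  finally have S1: "(\<Sum>i = m..<Suc t. \<Prod>j = i+1..<Suc t. int (k j)) = \<Sigma> * int (k t) + 1" .
  have eqt: "m + Suc d = Suc t" using t_def by simp
  show ?case unfolding eqt P1 S1 by (rule main)
qed

theorem theorem4:
  fixes r m :: nat and k :: "nat \<Rightarrow> nat"
  assumes "r \<ge> 3"
    and "\<And>i. i < r \<Longrightarrow> k i \<ge> 3"
    and "\<And>i j. i \<le> j \<Longrightarrow> j < r \<Longrightarrow> k i \<le> k j"
    and "2 \<le> m" and "m \<le> r - 1"
  shows "int (gen_schur r k) \<ge>
           (\<Prod>j = m..r-1. int (k j)) * int (gen_schur m k)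
           - (\<Sum>i = m..r-1. \<Prod>j = i+1..r-1. int (k j))"
proof -
  have eq: "\<And>a. {a..r-1} = {a..<r}" using assms(1) by auto
  have "m + (r - m) \<le> r" using assms(1,5) by simp
  from gs_iter[OF assms(2,3) this] have
    "int (gen_schur r k) \<ge> (\<Prod>j = m..<r. int (k j)) * int (gen_schur m k)
           - (\<Sum>i = m..<r. \<Prod>j = i+1..<r. int (k j))"
    using assms(5) by simp
  then show ?thesis by (simp only: eq)
qed

end
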